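(* Consider the closed-loop system described in the context, with fixed matrices $A,E,C,D,B$ and gains $K_0,K_1,K_2$, and with $c(\sigma)=\|\sigma\|^{-1/2}+\alpha$ for a given $\alpha>0$. Let $v(\zeta)=\zeta^TS\zeta$ and $V(x)=x^TR(\sigma)PR(\sigma)x$. If the matrix inequality $$\begin{bmatrix} A^TS+SA+\rho S & \bullet \\ \alpha^{-1}G_0^TE^TS & -\rho P\end{bmatrix}<0$$ is satisfied for scalars $\alpha>0$, $\rho>0$ and symmetric matrices $S\in\mathbb{R}^{r\times r}$, $S>0$, $P\in\mathbb{R}^{2n\times 2n}$, $P>0$, then along arbitrary trajectories of the linear subsystem $\dot\zeta=A\zeta+E\sigma$ (with $\sigma=G_0x$) the inequality $$\dot v<\rho\,(V-v)$$ holds for all $0\neq\zeta\in\mathbb{R}^r$ and all $0\neq x\in\mathbb{R}^{2n}$.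
   Context: Closed-loop system: $\dot\zeta=A\zeta+E\sigma$, $\dot\sigma=C\zeta+D\sigma+Bu+f(t)$, $\dot\eta=c(\sigma)^2\sigma$, $u=K_0\zeta+c(\sigma)K_1\sigma+K_2\eta$, with $\zeta\in\mathbb{R}^r$, $\sigma,\eta\in\mathbb{R}^n$, $u\in\mathbb{R}^m$, $A\in\mathbb{R}^{r\times r}$ Hurwitz, $E\in\mathbb{R}^{r\times n}$, $C\in\mathbb{R}^{n\times r}$, $D\in\mathbb{R}^{n\times n}$, $B\in\mathbb{R}^{n\times m}$ of full row rank, $f:\mathbb{R}_+\to\mathbb{R}^n$ smooth, and $c(\sigma)=1/\sqrt{\|\sigma\|}+\alpha$, $\alpha>0$. Solutions are understood in the sense of Filippov. $BK_2$ is assumed nonsingular, $z=\eta+(BK_2)^{-1}f(t)$ and $x=[\sigma^T\ z^T]^T\in\mathbb{R}^{2n}$. $R(\sigma)=\mathrm{diag}(c(\sigma)I_n,I_n)$, $G_0=[I_n\ \ 0]\in\mathbb{R}^{n\times 2n}$ (so $\sigma=G_0x$). The symbol $\bullet$ denotes the symmetric block. $\|\cdot\|$ is the Euclidean norm. *)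

theory Defs
  imports "HOL-Analysis.Analysis"
begin

text \<open>Vectors in R^r, R^n are \<open>real^'r\<close>, \<open>real^'n\<close>; R^{2n} is \<open>real^('n + 'n)\<close>,
  whose first block (Inl) is sigma and second block (Inr) is z.\<close>

definition pos_def_mat :: "real^'a^'a \<Rightarrow> bool" where
  "pos_def_mat M \<longleftrightarrow> transpose M = M \<and> (\<forall>w. w \<noteq> 0 \<longrightarrow> 0 < w \<bullet> (M *v w))"

definition neg_def_mat :: "real^'a^'a \<Rightarrow> bool" where
  "neg_def_mat M \<longleftrightarrow> transpose M = M \<and> (\<forall>w. w \<noteq> 0 \<longrightarrow> w \<bullet> (M *v w) < 0)"

definition block_mat :: "real^'a^'a \<Rightarrow> real^'b^'a \<Rightarrow> real^'a^'b \<Rightarrow> real^'b^'b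
    \<Rightarrow> real^('a + 'b)^('a + 'b)" where
  "block_mat M11 M12 M21 M22 = (\<chi> i j. case i of
      Inl a \<Rightarrow> (case j of Inl a' \<Rightarrow> M11 $ a $ a' | Inr b' \<Rightarrow> M12 $ a $ b')
    | Inr b \<Rightarrow> (case j of Inl a' \<Rightarrow> M21 $ b $ a' | Inr b' \<Rightarrow> M22 $ b $ b'))"

definition G0 :: "real^('n + 'n)^'n" where
  "G0 = (\<chi> i j. if j = Inl i then 1 else 0)"

definition cgain :: "real \<Rightarrow> real^'n \<Rightarrow> real" where
  "cgain \<alpha> \<sigma> = 1 / sqrt (norm \<sigma>) + \<alpha>"

definition Rmat :: "real \<Rightarrow> real^'n \<Rightarrow> real^('n + 'n)^('n + 'n)" where
  "Rmat \<alpha> \<sigma> = (\<chi> i j. if i = j then (case i of Inl _ \<Rightarrow> cgain \<alpha> \<sigma> | Inr _ \<Rightarrow> 1) else 0)"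

definition vfun :: "real^'r^'r \<Rightarrow> real^'r \<Rightarrow> real" where
  "vfun S \<zeta> = \<zeta> \<bullet> (S *v \<zeta>)"

definition Vfun :: "real \<Rightarrow> real^('n::finite+'n)^('n+'n) \<Rightarrow> real^('n+'n) \<Rightarrow> real" where
  "Vfun \<alpha> P x = (let R = Rmat \<alpha> (G0 *v x) in x \<bullet> (R *v (P *v (R *v x))))"

text \<open>Time derivative of v along the linear subsystem zeta' = A zeta + E sigma, sigma = G0 x:
  vdot = zeta'^T S zeta + zeta^T S zeta'.\<close>
definition vdot :: "real^'r::finite^'r \<Rightarrow> real^'r^'r \<Rightarrow> real^'n::finite^'r \<Rightarrow> real^'r \<Rightarrow> real^('n::finite+'n) \<Rightarrow> real" where
  "vdot S A E \<zeta> x = (let \<zeta>' = A *v \<zeta> + E *v (G0 *v x) in \<zeta>' \<bullet> (S *v \<zeta>) + \<zeta> \<bullet> (S *v \<zeta>'))"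

end

theory Submission
  imports Defs
begin

lemma sum_UNIV_sum:
  fixes f :: "('a::finite + 'b::finite) \<Rightarrow> 'c::comm_monoid_add"
  shows "sum f UNIV = sum (\<lambda>a. f (Inl a)) UNIV + sum (\<lambda>b. f (Inr b)) UNIV"
proof -
  have U: "(UNIV :: ('a+'b) set) = range Inl \<union> range Inr"
    by (auto intro: sum.exhaust) (metis rangeI sumE)
  have "sum f UNIV = sum f (range Inl) + sum f (range Inr)"
    unfolding U by (rule sum.union_disjoint) auto
  also have "\<dots> = sum (\<lambda>a. f (Inl a)) UNIV + sum (\<lambda>b. f (Inr b)) UNIV"
    by (simp add: sum.reindex)
  finally show ?thesis .
qed

definition joinv :: "real^'a \<Rightarrow> real^'b \<Rightarrow> real^('a+'b)" where
  "joinv u v = (\<chi> i. case i of Inl a \<Rightarrow> u $ a | Inr b \<Rightarrow> v $ b)"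

lemma block_quad:
  fixes u :: "real^'a::finite" and v :: "real^'b::finite"
  shows "joinv u v \<bullet> (block_mat M11 M12 M21 M22 *v joinv u v)
    = u \<bullet> (M11 *v u) + u \<bullet> (M12 *v v) + v \<bullet> (M21 *v u) + v \<bullet> (M22 *v v)"
  by (simp add: inner_vec_def matrix_vector_mult_def joinv_def block_mat_def sum_UNIV_sum
       sum_distrib_left distrib_left sum.distrib algebra_simps)

lemma inner_mv: "(x::real^'a::finite) \<bullet> (M *v y) = (transpose M *v x) \<bullet> y"
  by (simp add: dot_lmul_matrix)

lemma if_mult0: "(if P then a else (0::real)) * b = (if P then a * b else 0)"
  by simp

lemma G0_mv: "(G0 *v y) $ i = y $ (Inl i)"
  by (simp add: G0_def matrix_vector_mult_def if_mult0 cong: if_cong)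

lemma R_mv: "(Rmat \<alpha> s *v y) $ j = (case j of Inl _ \<Rightarrow> cgain \<alpha> s | Inr _ \<Rightarrow> 1) * y $ j"
  by (simp add: Rmat_def matrix_vector_mult_def if_mult0 cong: if_cong)

lemma R_sym: "transpose (Rmat \<alpha> s) = Rmat \<alpha> s"
  by (auto simp add: Rmat_def transpose_def vec_eq_iff)

lemma G0_R: "G0 *v (Rmat \<alpha> s *v y) = cgain \<alpha> s *\<^sub>R (G0 *v y)"
  by (simp add: vec_eq_iff G0_mv R_mv)


theorem lemma1:
  fixes A S :: "real^'r^'r" and E :: "real^'n^'r"
    and P :: "real^('n + 'n)^('n + 'n)" and \<alpha> \<rho> :: real
  assumes "\<alpha> > 0" and "\<rho> > 0"
    and "pos_def_mat S" and "pos_def_mat P"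
    and "neg_def_mat (block_mat
           (transpose A ** S + S ** A + \<rho> *\<^sub>R S)
           (transpose ((1 / \<alpha>) *\<^sub>R (transpose G0 ** transpose E ** S)))
           ((1 / \<alpha>) *\<^sub>R (transpose G0 ** transpose E ** S))
           (- (\<rho> *\<^sub>R P)))"
  shows "\<forall>\<zeta> x. \<zeta> \<noteq> 0 \<longrightarrow> x \<noteq> 0 \<longrightarrow>
           vdot S A E \<zeta> x < \<rho> * (Vfun \<alpha> P x - vfun S \<zeta>)"
proof (intro allI impI)
  fix \<zeta> :: "real^'r" and x :: "real^('n+'n)"
  assume z0: "\<zeta> \<noteq> 0" and "x \<noteq> 0"
  define \<sigma> where "\<sigma> = G0 *v x"
  define c where "c = cgain \<alpha> \<sigma>"
  define R where "R = Rmat \<alpha> \<sigma>"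
  define y where "y = R *v x"
  define t where "t = \<alpha> / c"
  define k where "k = 1 / \<alpha>"
  define N where "N = transpose G0 ** transpose E ** S"
  define Q where "Q = transpose A ** S + S ** A + \<rho> *\<^sub>R S"
  have Ssym: "transpose S = S" using assms(3) by (simp add: pos_def_mat_def)
  have Psym: "transpose P = P" using assms(4) by (simp add: pos_def_mat_def)
  have cge: "c \<ge> \<alpha>" unfolding c_def cgain_def by simp
  have cpos: "c > 0" using cge assms(1) by linarith
  have tpos: "t > 0" unfolding t_def using cpos assms(1) by simp
  have tle: "t \<le> 1" unfolding t_def using cpos cge by simp
  have t2: "t * t \<le> 1" using tpos tle by (simp add: mult_le_one)
  have tkc: "t * k * c = 1" unfolding t_def k_def using cpos assms(1) by simp
  have V: "Vfun \<alpha> P x = y \<bullet> (P *v y)"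
    unfolding Vfun_def Let_def y_def R_def \<sigma>_def
    by (subst inner_mv) (simp add: R_sym)
  have Vnn: "y \<bullet> (P *v y) \<ge> 0"
    using assms(4) unfolding pos_def_mat_def by (cases "y = 0") (auto intro: less_imp_le)
  have Gy: "G0 *v y = c *\<^sub>R \<sigma>"
    unfolding y_def R_def c_def \<sigma>_def by (rule G0_R)
  define w where "w = joinv \<zeta> (t *\<^sub>R y)"
  have w0: "w \<noteq> 0"
  proof
    assume "w = 0"
    then have "\<forall>a. w $ Inl a = 0" by simp
    then have "\<zeta> = 0" by (simp add: w_def joinv_def vec_eq_iff)
    with z0 show False by simp
  qed
  have neg: "w \<bullet> (block_mat Q (transpose (k *\<^sub>R N)) (k *\<^sub>R N) (- (\<rho> *\<^sub>R P)) *v w) < 0"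
    using assms(5) w0 unfolding neg_def_mat_def Q_def N_def k_def by blast
  have h1: "\<zeta> \<bullet> (Q *v \<zeta>) = 2 * ((A *v \<zeta>) \<bullet> (S *v \<zeta>)) + \<rho> * vfun S \<zeta>"
  proof -
    have "Q *v \<zeta> = transpose A *v (S *v \<zeta>) + S *v (A *v \<zeta>) + \<rho> *\<^sub>R (S *v \<zeta>)"
      unfolding Q_def by (simp add: matrix_vector_mult_add_rdistrib matrix_vector_mul_assoc
          scaleR_matrix_vector_assoc)
    moreover have "\<zeta> \<bullet> (transpose A *v (S *v \<zeta>)) = (A *v \<zeta>) \<bullet> (S *v \<zeta>)"
      by (subst inner_mv) simp
    moreover have "\<zeta> \<bullet> (S *v (A *v \<zeta>)) = (A *v \<zeta>) \<bullet> (S *v \<zeta>)"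
      by (subst inner_mv) (simp add: Ssym inner_commute)
    ultimately show ?thesis by (simp add: inner_add_right vfun_def)
  qed
  have h2: "(t *\<^sub>R y) \<bullet> ((k *\<^sub>R N) *v \<zeta>) = (E *v \<sigma>) \<bullet> (S *v \<zeta>)"
  proof -
    have "(k *\<^sub>R N) *v \<zeta> = k *\<^sub>R (transpose G0 *v (transpose E *v (S *v \<zeta>)))"
      unfolding N_def by (simp add: matrix_vector_mul_assoc scaleR_matrix_vector_assoc matrix_mul_assoc)
    then have "(t *\<^sub>R y) \<bullet> ((k *\<^sub>R N) *v \<zeta>)
        = t * k * (y \<bullet> (transpose G0 *v (transpose E *v (S *v \<zeta>))))" by simp
    also have "y \<bullet> (transpose G0 *v (transpose E *v (S *v \<zeta>)))
        = (G0 *v y) \<bullet> (transpose E *v (S *v \<zeta>))" by (subst inner_mv) simp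
    also have "\<dots> = c * ((E *v \<sigma>) \<bullet> (S *v \<zeta>))"
      unfolding Gy by (subst inner_mv) (simp add: matrix_vector_mult_scaleR)
    finally show ?thesis using tkc by (metis mult.assoc mult_1)
  qed
  have h3: "\<zeta> \<bullet> (transpose (k *\<^sub>R N) *v (t *\<^sub>R y)) = (E *v \<sigma>) \<bullet> (S *v \<zeta>)"
    using h2 by (subst inner_mv) (simp add: inner_commute)
  have h4: "(t *\<^sub>R y) \<bullet> ((- (\<rho> *\<^sub>R P)) *v (t *\<^sub>R y)) = - (\<rho> * (t * t) * (y \<bullet> (P *v y)))"
  proof -
    have "(- (\<rho> *\<^sub>R P)) *v (t *\<^sub>R y) = (- (\<rho> * t)) *\<^sub>R (P *v y)"
    proof -
      have "(- (\<rho> *\<^sub>R P)) = (- \<rho>) *\<^sub>R P" by simp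
      then have "(- (\<rho> *\<^sub>R P)) *v (t *\<^sub>R y) = (- \<rho>) *\<^sub>R (P *v (t *\<^sub>R y))"
        by (simp only: scaleR_matrix_vector_assoc)
      then show ?thesis by (simp add: matrix_vector_mult_scaleR)
    qed
    then show ?thesis by simp
  qed
  have vd: "vdot S A E \<zeta> x = 2 * ((A *v \<zeta>) \<bullet> (S *v \<zeta>)) + 2 * ((E *v \<sigma>) \<bullet> (S *v \<zeta>))"
  proof -
    have "\<zeta> \<bullet> (S *v (A *v \<zeta> + E *v \<sigma>)) = (A *v \<zeta> + E *v \<sigma>) \<bullet> (S *v \<zeta>)"
      by (subst inner_mv) (simp add: Ssym inner_commute)
    then show ?thesis unfolding vdot_def Let_def \<sigma>_def[symmetric]
      by (simp add: inner_add_left)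
  qed
  have bq: "w \<bullet> (block_mat Q (transpose (k *\<^sub>R N)) (k *\<^sub>R N) (- (\<rho> *\<^sub>R P)) *v w)
     = 2 * ((A *v \<zeta>) \<bullet> (S *v \<zeta>)) + \<rho> * vfun S \<zeta> + 2 * ((E *v \<sigma>) \<bullet> (S *v \<zeta>))
       - \<rho> * (t * t) * (y \<bullet> (P *v y))"
    unfolding w_def block_quad h1 h2 h3 h4 by simp
  have "\<rho> * (t * t) * (y \<bullet> (P *v y)) \<le> \<rho> * (y \<bullet> (P *v y))"
  proof -
    have "(t * t) * (y \<bullet> (P *v y)) \<le> 1 * (y \<bullet> (P *v y))"
      using t2 Vnn by (rule mult_right_mono)
    then show ?thesis using assms(2) by (simp add: mult.assoc)
  qed
  then show "vdot S A E \<zeta> x < \<rho> * (Vfun \<alpha> P x - vfun S \<zeta>)"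
    using neg bq vd V by (simp add: right_diff_distrib)
qed

end
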